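(* Let $S$ be a set. Every structured set of $S$-probabilities is a $\vee$-specific set of $S$-probabilities, and every $\vee$-specific set of $S$-probabilities is a weakly structured set of $S$-probabilities; i.e. $\mathcal C_3\subseteq\mathcal C_2\subseteq\mathcal C_4$.
   Context: An $S$-probability is a function $p\colon S\to[0,1]$; sets $P$ of them are ordered pointwise, $0,1$ are constant functions, $p':=1-p$, sums are pointwise; $p\vee q$ denotes the supremum in $P$. $p\wedge q=0$ means the only $x\in P$ with $x\le p,q$ is $x=0$; $p\perp q$ means $p\le 1-q$. Conditions: (1) $0,1\in P$; (2) $p\in P\Rightarrow 1-p\in P$; (3) $p,q\in P$, $p\wedge q=0\Rightarrow p+q\in P$; (6) $p,q\in P$, $p\wedge q=0\Rightarrow p+q\in P$ and $p+q$ is the supremum $p\vee q$ in $P$; (7) $p,q,r\in P$, $p\perp q$, $q\perp r$, $p\wedge r=0\Rightarrow p+q+r\in P$; (8) $p,q,r\in P$, $p\perp q$, $q\perp r$, $p\wedge r=0\Rightarrow p+q+r\le 1$. $\mathcal C_1$: specific sets (satisfying (1),(2),(3)); $\mathcal C_2$: $\vee$-specific sets (specific sets satisfying (6)); $\mathcal C_3$: structured sets (satisfying (1),(2),(7)); $\mathcal C_4$: weakly structured sets (satisfying (1),(2),(8)). *)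

theory Defs
  imports Complex_Main "HOL-Library.Function_Algebras"
begin

text \<open>An S-probability is a function p : S \<Rightarrow> [0,1]; S is modelled as the type 's.
  Sets P of S-probabilities are ordered pointwise (the order on functions in HOL is pointwise).\<close>

definition sprob :: "('s \<Rightarrow> real) \<Rightarrow> bool" where
  "sprob p \<longleftrightarrow> (\<forall>s. 0 \<le> p s \<and> p s \<le> 1)"

definition sprob_set :: "('s \<Rightarrow> real) set \<Rightarrow> bool" where
  "sprob_set P \<longleftrightarrow> (\<forall>p\<in>P. sprob p)"

definition meet_zero :: "('s \<Rightarrow> real) set \<Rightarrow> ('s \<Rightarrow> real) \<Rightarrow> ('s \<Rightarrow> real) \<Rightarrow> bool" where
  "meet_zero P p q \<longleftrightarrow> (\<forall>x\<in>P. x \<le> p \<and> x \<le> q \<longrightarrow> x = 0)"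

definition orth :: "('s \<Rightarrow> real) \<Rightarrow> ('s \<Rightarrow> real) \<Rightarrow> bool" where
  "orth p q \<longleftrightarrow> p \<le> 1 - q"

definition is_sup_in :: "('s \<Rightarrow> real) set \<Rightarrow> ('s \<Rightarrow> real) \<Rightarrow> ('s \<Rightarrow> real) \<Rightarrow> ('s \<Rightarrow> real) \<Rightarrow> bool" where
  "is_sup_in P p q r \<longleftrightarrow> r \<in> P \<and> p \<le> r \<and> q \<le> r \<and> (\<forall>u\<in>P. p \<le> u \<and> q \<le> u \<longrightarrow> r \<le> u)"

definition cond1 :: "('s \<Rightarrow> real) set \<Rightarrow> bool" where
  "cond1 P \<longleftrightarrow> 0 \<in> P \<and> 1 \<in> P"

definition cond2 :: "('s \<Rightarrow> real) set \<Rightarrow> bool" where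
  "cond2 P \<longleftrightarrow> (\<forall>p\<in>P. 1 - p \<in> P)"

definition cond3 :: "('s \<Rightarrow> real) set \<Rightarrow> bool" where
  "cond3 P \<longleftrightarrow> (\<forall>p\<in>P. \<forall>q\<in>P. meet_zero P p q \<longrightarrow> p + q \<in> P)"

definition cond6 :: "('s \<Rightarrow> real) set \<Rightarrow> bool" where
  "cond6 P \<longleftrightarrow> (\<forall>p\<in>P. \<forall>q\<in>P. meet_zero P p q \<longrightarrow> p + q \<in> P \<and> is_sup_in P p q (p + q))"

definition cond7 :: "('s \<Rightarrow> real) set \<Rightarrow> bool" where
  "cond7 P \<longleftrightarrow> (\<forall>p\<in>P. \<forall>q\<in>P. \<forall>r\<in>P.
      orth p q \<and> orth q r \<and> meet_zero P p r \<longrightarrow> p + q + r \<in> P)"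

definition cond8 :: "('s \<Rightarrow> real) set \<Rightarrow> bool" where
  "cond8 P \<longleftrightarrow> (\<forall>p\<in>P. \<forall>q\<in>P. \<forall>r\<in>P.
      orth p q \<and> orth q r \<and> meet_zero P p r \<longrightarrow> p + q + r \<le> 1)"

definition specific :: "('s \<Rightarrow> real) set \<Rightarrow> bool" where
  "specific P \<longleftrightarrow> sprob_set P \<and> cond1 P \<and> cond2 P \<and> cond3 P"

definition vee_specific :: "('s \<Rightarrow> real) set \<Rightarrow> bool" where
  "vee_specific P \<longleftrightarrow> specific P \<and> cond6 P"

definition structured :: "('s \<Rightarrow> real) set \<Rightarrow> bool" where
  "structured P \<longleftrightarrow> sprob_set P \<and> cond1 P \<and> cond2 P \<and> cond7 P"

definition weakly_structured :: "('s \<Rightarrow> real) set \<Rightarrow> bool" where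
  "weakly_structured P \<longleftrightarrow> sprob_set P \<and> cond1 P \<and> cond2 P \<and> cond8 P"

end

theory Submission
  imports Defs
begin

lemma part1:
  assumes "structured P" shows "vee_specific P"
proof -
  have sp: "sprob_set P" and c1: "cond1 P" and c2: "cond2 P" and c7: "cond7 P"
    using assms unfolding structured_def by auto
  have pr: "\<And>p s. p \<in> P \<Longrightarrow> 0 \<le> p s \<and> p s \<le> 1"
    using sp unfolding sprob_set_def sprob_def by auto
  have z: "(0::'a \<Rightarrow> real) \<in> P" using c1 cond1_def by auto
  have sum: "p + q \<in> P" if "p \<in> P" "q \<in> P" "meet_zero P p q" for p q
  proof -
    have "orth p 0" "orth 0 q" using pr that unfolding orth_def le_fun_def by auto
    then have "p + 0 + q \<in> P" using c7 that z unfolding cond7_def by blast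
    then show ?thesis by simp
  qed
  have c3: "cond3 P" unfolding cond3_def using sum by blast
  have c6: "cond6 P" unfolding cond6_def is_sup_in_def
  proof (intro ballI impI conjI)
    fix p q assume p: "p \<in> P" and q: "q \<in> P" and m: "meet_zero P p q"
    show "p + q \<in> P" "p + q \<in> P" using sum p q m by auto
    show "p \<le> p + q" "q \<le> p + q" using pr p q unfolding le_fun_def by auto
    fix u assume u: "u \<in> P" and h: "p \<le> u \<and> q \<le> u"
    have u': "1 - u \<in> P" using c2 u cond2_def by auto
    have "orth p (1 - u)" "orth (1 - u) q" using h unfolding orth_def le_fun_def by auto
    then have "p + (1 - u) + q \<in> P" using c7 p q u' m unfolding cond7_def by blast
    then have "\<And>s. (p + (1 - u) + q) s \<le> 1" using pr by blast
    then show "p + q \<le> u" unfolding le_fun_def by (auto simp: algebra_simps)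
  qed
  show ?thesis unfolding vee_specific_def specific_def using sp c1 c2 c3 c6 by auto
qed

lemma part2:
  assumes "vee_specific Q" shows "weakly_structured Q"
proof -
  have sp: "sprob_set Q" and c1: "cond1 Q" and c2: "cond2 Q" and c6: "cond6 Q"
    using assms unfolding vee_specific_def specific_def by auto
  have c8: "cond8 Q" unfolding cond8_def
  proof (intro ballI impI)
    fix p q r assume p: "p \<in> Q" and q: "q \<in> Q" and r: "r \<in> Q"
      and h: "orth p q \<and> orth q r \<and> meet_zero Q p r"
    have q': "1 - q \<in> Q" using c2 q cond2_def by auto
    have "is_sup_in Q p r (p + r)" using c6 p r h unfolding cond6_def by blast
    moreover have "p \<le> 1 - q" "r \<le> 1 - q" using h unfolding orth_def le_fun_def by (auto, smt (verit))
    ultimately have "p + r \<le> 1 - q" using q' unfolding is_sup_in_def by blast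
    then show "p + q + r \<le> 1" unfolding le_fun_def by (auto simp: algebra_simps)
  qed
  show ?thesis unfolding weakly_structured_def using sp c1 c2 c8 by auto
qed

theorem lemma3p1:
  fixes P Q :: "('s \<Rightarrow> real) set"
  shows "(structured P \<longrightarrow> vee_specific P) \<and> (vee_specific Q \<longrightarrow> weakly_structured Q)"
  using part1 part2 by blast

end
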